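(* Let $\langle T,\le\rangle$ be a temporal flow and let $v$ be a temporal assignment over variables on $T$, extended to all formulas as described in the context. Then for every formula $\varphi$, the function $v(\varphi,\cdot):T\to\{0,\tfrac12,1\}$ is admissible.
   Context: A temporal flow is a totally ordered infinite set $\langle T,\le\rangle$. On $\{0,\frac12,1\}$ (with $0<\frac12<1$) put $\neg_3x=1-x$ and $x\to_3y=\min(1,1-x+y)$. A function $f:T\to\{0,\frac12,1\}$ is admissible if either (i) $f$ is constant (with value $0$, $\frac12$ or $1$), or (ii) there exist $i\in\{0,1\}$ and $t\in T$, with $t$ not the minimum of $T$ (if $T$ has a minimum), such that $f(t')=i$ for all $t'\ge t$ and $f(t'')=\frac12$ for all $t''<t$. Formulas are built from propositional variables and $\bot$ using the connectives $\neg$ and $\to$. A temporal assignment over variables is a map $v:VAR\times T\to\{0,\frac12,1\}$ such that $v(x,\cdot)$ is admissible for every variable $x$. It is extended to formulas inductively: $v(\bot,t)=0$; $v(\neg\psi,t)=\neg_3v(\psi,t)$; and $v(\psi\to\chi,t)=v(\psi,t)\to_3v(\chi,t)$ if $v(\psi,t)\to_3v(\chi,t)=v(\psi,t')\to_3v(\chi,t')$ for every $t'\ge t$, and $v(\psi\to\chi,t)=\frac12$ otherwise. *)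

theory Defs
  imports Complex_Main
begin

text \<open>Truth values are the reals 0, 1/2, 1 with the Lukasiewicz operations.\<close>

definition neg3 :: "real \<Rightarrow> real" where
  "neg3 x = 1 - x"

definition imp3 :: "real \<Rightarrow> real \<Rightarrow> real" where
  "imp3 x y = min 1 (1 - x + y)"

definition temporal_flow :: "'t::linorder itself \<Rightarrow> bool" where
  "temporal_flow _ \<longleftrightarrow> infinite (UNIV :: 't set)"

definition admissible :: "('t::linorder \<Rightarrow> real) \<Rightarrow> bool" where
  "admissible f \<longleftrightarrow>
     (\<exists>c \<in> {0, 1/2, 1}. \<forall>t. f t = c) \<or>
     (\<exists>i \<in> {0, 1}. \<exists>t. (\<exists>s. s < t) \<and>
        (\<forall>t'. t \<le> t' \<longrightarrow> f t' = i) \<and> (\<forall>t''. t'' < t \<longrightarrow> f t'' = 1/2))"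

datatype 'v form = Var 'v | Bot | Neg "'v form" | Imp "'v form" "'v form"

definition temporal_assignment :: "('v \<Rightarrow> 't::linorder \<Rightarrow> real) \<Rightarrow> bool" where
  "temporal_assignment v \<longleftrightarrow> (\<forall>x. admissible (v x))"

fun eval :: "('v \<Rightarrow> 't::linorder \<Rightarrow> real) \<Rightarrow> 'v form \<Rightarrow> 't \<Rightarrow> real" where
  "eval v (Var x) t = v x t"
| "eval v Bot t = 0"
| "eval v (Neg p) t = neg3 (eval v p t)"
| "eval v (Imp p q) t =
     (if \<forall>t'. t \<le> t' \<longrightarrow> imp3 (eval v p t) (eval v q t) = imp3 (eval v p t') (eval v q t')
      then imp3 (eval v p t) (eval v q t) else 1/2)"

end

theory Submission
  imports Defs
begin

definition tail :: "'t::linorder set \<Rightarrow> bool" where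
  "tail U \<longleftrightarrow> U = UNIV \<or> (\<exists>c. U = {c..})"

definition good :: "('t::linorder \<Rightarrow> real) \<Rightarrow> bool" where
  "good f \<longleftrightarrow> (\<exists>e\<in>{0, 1/2, 1}. \<exists>U. tail U \<and> f = (\<lambda>t. if t \<in> U then e else 1/2))"

lemma tail_up: "tail U \<Longrightarrow> x \<in> U \<Longrightarrow> x \<le> y \<Longrightarrow> y \<in> U"
  unfolding tail_def by auto

lemma tail_ne: "tail U \<Longrightarrow> \<exists>x. x \<in> U"
  unfolding tail_def by auto

lemma tail_int: "tail U \<Longrightarrow> tail V \<Longrightarrow> tail (U \<inter> V)"
  unfolding tail_def
proof (elim disjE exE)
  fix a b assume "U = {a..}" "V = {b..}"
  then have "U \<inter> V = {max a b..}" by auto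
  then show "U \<inter> V = UNIV \<or> (\<exists>c. U \<inter> V = {c..})" by blast
qed auto

lemma tail_lin: "tail U \<Longrightarrow> tail V \<Longrightarrow> U \<subseteq> V \<or> V \<subseteq> U"
  unfolding tail_def
proof (elim disjE exE)
  fix a b assume "U = {a..}" "V = {b..}"
  then show "U \<subseteq> V \<or> V \<subseteq> U" by (cases "a \<le> b") auto
qed auto

lemma admissible_good: "admissible f \<Longrightarrow> good f"
  unfolding admissible_def good_def
proof (elim disjE bexE exE conjE)
  fix c assume "c \<in> {0, 1/2, 1::real}" "\<forall>t. f t = c"
  then show "\<exists>e\<in>{0, 1/2, 1}. \<exists>U. tail U \<and> f = (\<lambda>t. if t \<in> U then e else 1/2)"
    by (intro bexI[of _ c] exI[of _ UNIV]) (auto simp: tail_def)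
next
  fix i t s assume "i \<in> {0, 1::real}" "s < t" "\<forall>t'. t \<le> t' \<longrightarrow> f t' = i" "\<forall>t''. t'' < t \<longrightarrow> f t'' = 1/2"
  then show "\<exists>e\<in>{0, 1/2, 1}. \<exists>U. tail U \<and> f = (\<lambda>t. if t \<in> U then e else 1/2)"
    by (intro bexI[of _ i] exI[of _ "{t..}"]) (auto simp: tail_def not_le)
qed

lemma good_admissible: "good f \<Longrightarrow> admissible f"
  unfolding good_def
proof (elim bexE exE conjE)
  fix e U assume e: "e \<in> {0, 1/2, 1::real}" and U: "tail U" and f: "f = (\<lambda>t. if t \<in> U then e else 1/2)"
  show "admissible f"
  proof (cases "U = UNIV \<or> e = 1/2")
    case True
    then show ?thesis using e f unfolding admissible_def by auto
  next
    case False
    then obtain c where c: "U = {c..}" using U tail_def by blast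
    show ?thesis
    proof (cases "\<exists>s. s < c")
      case True
      then show ?thesis using e f c False unfolding admissible_def
        by (intro disjI2 bexI[of _ e] exI[of _ c]) (auto simp: not_le)
    next
      case nt: False
      then have "U = UNIV" using c by (auto simp: not_less)
      then show ?thesis using False by simp
    qed
  qed
qed

lemma three_regions:
  fixes h :: "'t::linorder \<Rightarrow> real"
  assumes V: "tail V" and W: "tail W" and VW: "V \<subseteq> W"
    and h: "\<And>t. h t = (if t \<in> V then A else if t \<in> W then B else C)"
  defines "S \<equiv> {t. \<forall>t'. t \<le> t' \<longrightarrow> h t' = A}"
  shows "S = UNIV \<or> S = V \<or> S = W"
proof -
  have Vs: "V \<subseteq> S" using V h unfolding S_def by (auto dest: tail_up)
  show ?thesis
  proof (cases "B = A")
    case True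
    show ?thesis
    proof (cases "C = A")
      case True
      then show ?thesis using \<open>B = A\<close> h unfolding S_def by auto
    next
      case False
      have "S = W"
      proof
        show "S \<subseteq> W"
        proof
          fix t assume "t \<in> S"
          then have "h t = A" unfolding S_def by auto
          then show "t \<in> W" using False h[of t] VW by (auto split: if_splits)
        qed
        show "W \<subseteq> S" using W h True VW unfolding S_def by (auto dest: tail_up)
      qed
      then show ?thesis by simp
    qed
  next
    case False
    show ?thesis
    proof (cases "W \<subseteq> V")
      case True
      then have "W = V" using VW by auto
      then show ?thesis
      proof (cases "C = A")
        case True
        then show ?thesis using \<open>W = V\<close> h unfolding S_def by auto
      next
        case False
        have "S \<subseteq> V"
        proof
          fix t assume "t \<in> S"
          then have "h t = A" unfolding S_def by auto
          then show "t \<in> V" using False \<open>B \<noteq> A\<close> h[of t] by (auto split: if_splits)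
        qed
        then show ?thesis using Vs by auto
      qed
    next
      case nWV: False
      then obtain w where w: "w \<in> W" "w \<notin> V" by auto
      have "S \<subseteq> V"
      proof
        fix t assume t: "t \<in> S"
        show "t \<in> V"
        proof (rule ccontr)
          assume tV: "t \<notin> V"
          show False
          proof (cases "t \<in> W")
            case True
            then show False using t tV h \<open>B \<noteq> A\<close> unfolding S_def by auto
          next
            case False
            then have "t \<le> w" using w W by (meson linear tail_up)
            then have "h w = A" using t unfolding S_def by auto
            then show False using h w \<open>B \<noteq> A\<close> by auto
          qed
        qed
      qed
      then show ?thesis using Vs by auto
    qed
  qed
qed

lemma imp3_vals: "a \<in> {0, 1/2, 1::real} \<Longrightarrow> b \<in> {0, 1/2, 1::real} \<Longrightarrow> imp3 a b \<in> {0, 1/2, 1}"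
  unfolding imp3_def by auto

lemma good_imp:
  fixes f g :: "'t::linorder \<Rightarrow> real"
  assumes "good f" "good g"
  shows "good (\<lambda>t. if \<forall>t'. t \<le> t' \<longrightarrow> imp3 (f t) (g t) = imp3 (f t') (g t')
      then imp3 (f t) (g t) else 1/2)"
proof -
  obtain e1 U1 where e1: "e1 \<in> {0, 1/2, 1}" and U1: "tail U1" and f: "f = (\<lambda>t. if t \<in> U1 then e1 else 1/2)"
    using assms(1) unfolding good_def by blast
  obtain e2 U2 where e2: "e2 \<in> {0, 1/2, 1}" and U2: "tail U2" and g: "g = (\<lambda>t. if t \<in> U2 then e2 else 1/2)"
    using assms(2) unfolding good_def by blast
  define h where "h t = imp3 (f t) (g t)" for t
  define V where "V = U1 \<inter> U2"
  define W where "W = U1 \<union> U2"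
  define A where "A = imp3 e1 e2"
  define B where "B = (if U1 \<subseteq> U2 then imp3 (1/2) e2 else imp3 e1 (1/2))"
  define C where "C = imp3 (1/2) (1/2)"
  have V: "tail V" unfolding V_def using U1 U2 by (rule tail_int)
  have W: "tail W" unfolding W_def using U1 U2 tail_lin by (metis sup.absorb1 sup.absorb2)
  have hh: "h t = (if t \<in> V then A else if t \<in> W then B else C)" for t
    using tail_lin[OF U1 U2] unfolding h_def f g V_def W_def A_def B_def C_def by auto
  define S where "S = {t. \<forall>t'. t \<le> t' \<longrightarrow> h t' = A}"
  have S: "tail S"
    using three_regions[OF V W _ hh] V W unfolding S_def[symmetric] V_def W_def
    by (auto simp: tail_def)
  obtain v0 where v0: "v0 \<in> V" using tail_ne[OF V] by blast
  have eq: "(\<forall>t'. t \<le> t' \<longrightarrow> h t = h t') \<longleftrightarrow> t \<in> S" for t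
  proof
    assume a: "\<forall>t'. t \<le> t' \<longrightarrow> h t = h t'"
    have "max t v0 \<in> V" using v0 V tail_up by (metis max.cobounded2)
    then have "h t = A" using a hh by (metis max.cobounded1)
    then show "t \<in> S" using a unfolding S_def by auto
  next
    assume "t \<in> S" then show "\<forall>t'. t \<le> t' \<longrightarrow> h t = h t'" unfolding S_def by auto
  qed
  have res: "(\<lambda>t. if \<forall>t'. t \<le> t' \<longrightarrow> h t = h t' then h t else 1/2) = (\<lambda>t. if t \<in> S then A else 1/2)"
  proof
    fix t show "(if \<forall>t'. t \<le> t' \<longrightarrow> h t = h t' then h t else 1/2) = (if t \<in> S then A else 1/2)"
      using eq[of t] unfolding S_def by auto
  qed
  have "A \<in> {0, 1/2, 1}" unfolding A_def using e1 e2 by (rule imp3_vals)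
  then show ?thesis using res S unfolding h_def good_def by blast
qed

lemma good_eval: "temporal_assignment v \<Longrightarrow> good (eval v phi)"
proof (induction phi)
  case (Var x)
  then show ?case using admissible_good unfolding temporal_assignment_def
    by (metis eval.simps(1) ext)
next
  case Bot
  have "eval v Bot = (\<lambda>t. if t \<in> UNIV then 0 else 1/2)" by auto
  then show ?case unfolding good_def tail_def by blast
next
  case (Neg p)
  then obtain e U where e: "e \<in> {0, 1/2, 1::real}" and U: "tail U" and f: "eval v p = (\<lambda>t. if t \<in> U then e else 1/2)"
    unfolding good_def by blast
  have "eval v (Neg p) = (\<lambda>t. if t \<in> U then 1 - e else 1/2)"
    using f by (auto simp: neg3_def fun_eq_iff dest: fun_cong)
  moreover have "1 - e \<in> {0, 1/2, 1::real}" using e by auto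
  ultimately show ?case using U unfolding good_def by blast
next
  case (Imp p q)
  have "eval v (Imp p q) = (\<lambda>t. if \<forall>t'. t \<le> t' \<longrightarrow> imp3 (eval v p t) (eval v q t) = imp3 (eval v p t') (eval v q t')
      then imp3 (eval v p t) (eval v q t) else 1/2)" by auto
  then show ?case using good_imp[OF Imp.IH(1)[OF Imp.prems] Imp.IH(2)[OF Imp.prems]] by simp
qed

theorem mainTheorem2:
  fixes v :: "'v \<Rightarrow> 't::linorder \<Rightarrow> real" and phi :: "'v form"
  assumes "temporal_flow TYPE('t)"
    and "temporal_assignment v"
  shows "admissible (eval v phi)"
  using good_admissible good_eval assms(2) by blast

end
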